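(* Let $m,n,p,r$ be positive integers, let $\mathcal{A}:\mathbb{C}^{m\times n}\to\mathbb{C}^p$ be a linear operator with $\delta_{4r}(\mathcal{A})\le 0.04$, let $X_0\in\mathbb{C}^{m\times n}$ with $\mathrm{rank}(X_0)\le r$, let $\nu\in\mathbb{C}^p$, and let $b=\mathcal{A}X_0+\nu$. Let $(\widehat{X}_k)_{k\ge0}$ be any sequence of estimates produced by ADMiRA with input $(\mathcal{A},b,r)$. Then for each $k\ge0$, $$\|X_0-\widehat{X}_{k+1}\|_F\le 0.5\|X_0-\widehat{X}_k\|_F+6.5\|\nu\|_2,$$ and consequently $\|X_0-\widehat{X}_k\|_F\le 2^{-k}\|X_0\|_F+13\|\nu\|_2$ for all $k\ge0$.
   Context: $\mathbb{C}^p$ has inner product $\langle x,y\rangle=y^Hx$ and norm $\|\cdot\|_2$; $\mathbb{C}^{m\times n}$ has inner product $\langle X,Y\rangle=\mathrm{tr}(Y^HX)$ and Frobenius norm $\|\cdot\|_F$; $\mathcal{A}^*$ is the adjoint of $\mathcal{A}$. For $s\ge1$, $\delta_s(\mathcal{A})$ is the smallest $\delta\ge0$ such that $(1-\delta)\|X\|_F^2\le\|\mathcal{A}X\|_2^2\le(1+\delta)\|X\|_F^2$ for all $X$ with $\mathrm{rank}(X)\le s$. The set of atoms $\mathbb{O}$ is a set of unit-Frobenius-norm rank-one matrices such that every nonzero rank-one matrix is a scalar multiple of exactly one element of $\mathbb{O}$. For $\Psi\subset\mathbb{O}$, $\mathcal{P}_\Psi$ is the orthogonal projection onto $\mathrm{span}(\Psi)$.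 ADMiRA with input $(\mathcal{A},b,r)$: set $\widehat{X}_0=0$, $\widehat{\Psi}_0=\emptyset$; for $k=0,1,2,\dots$: (1) choose $\Psi'_{k+1}$ maximizing $\|\mathcal{P}_\Psi\mathcal{A}^*(b-\mathcal{A}\widehat{X}_k)\|_F$ over $\Psi\subset\mathbb{O}$, $|\Psi|\le 2r$; (2) $\widetilde{\Psi}_{k+1}=\Psi'_{k+1}\cup\widehat{\Psi}_k$; (3) $\widetilde{X}_{k+1}$ minimizes $\|b-\mathcal{A}X\|_2$ over $X\in\mathrm{span}(\widetilde{\Psi}_{k+1})$; (4) choose $\widehat{\Psi}_{k+1}$ maximizing $\|\mathcal{P}_\Psi\widetilde{X}_{k+1}\|_F$ over $\Psi\subset\mathbb{O}$, $|\Psi|\le r$; (5) $\widehat{X}_{k+1}=\mathcal{P}_{\widehat{\Psi}_{k+1}}\widetilde{X}_{k+1}$. *)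

theory Defs
  imports "HOL-Analysis.Analysis"
begin

text \<open>Complex m x n matrices are rendered as complex^'n^'m (rows indexed by 'm),
  vectors in C^p as complex^'p.  The library norm on these types is the
  Frobenius norm resp. the Euclidean 2-norm.\<close>

definition cmscale :: "complex \<Rightarrow> complex^'n^'m \<Rightarrow> complex^'n^'m" where
  "cmscale c X = (\<chi> i j. c * X$i$j)"

definition cvscale :: "complex \<Rightarrow> complex^'p \<Rightarrow> complex^'p" where
  "cvscale c v = (\<chi> i. c * v$i)"

definition vinner :: "complex^'p \<Rightarrow> complex^'p \<Rightarrow> complex" where
  "vinner x y = (\<Sum>i\<in>UNIV. x$i * cnj (y$i))"

definition minner :: "complex^'n^'m \<Rightarrow> complex^'n^'m \<Rightarrow> complex" where
  "minner X Y = (\<Sum>i\<in>UNIV. \<Sum>j\<in>UNIV. X$i$j * cnj (Y$i$j))"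

definition clinear_op :: "(complex^'n^'m \<Rightarrow> complex^'p) \<Rightarrow> bool" where
  "clinear_op A \<longleftrightarrow> (\<forall>X Y. A (X + Y) = A X + A Y) \<and> (\<forall>c X. A (cmscale c X) = cvscale c (A X))"

definition adjoint_op :: "(complex^'n^'m \<Rightarrow> complex^'p) \<Rightarrow> complex^'p \<Rightarrow> complex^'n^'m" where
  "adjoint_op A y = (THE Z. \<forall>X. vinner (A X) y = minner X Z)"

definition cspan :: "(complex^'n^'m) set \<Rightarrow> (complex^'n^'m) set" where
  "cspan S = {X. \<exists>T c. finite T \<and> T \<subseteq> S \<and> X = (\<Sum>a\<in>T. cmscale (c a) a)}"

definition proj_span :: "(complex^'n^'m) set \<Rightarrow> complex^'n^'m \<Rightarrow> complex^'n^'m" where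
  "proj_span Psi X = (THE Y. Y \<in> cspan Psi \<and> (\<forall>Z\<in>cspan Psi. minner (X - Y) Z = 0))"

definition rip_const :: "(complex^'n^'m \<Rightarrow> complex^'p) \<Rightarrow> nat \<Rightarrow> real" where
  "rip_const A s = Inf {\<delta>. \<delta> \<ge> 0 \<and> (\<forall>X::complex^'n^'m. rank X \<le> s \<longrightarrow>
      (1 - \<delta>) * (norm X)\<^sup>2 \<le> (norm (A X))\<^sup>2 \<and> (norm (A X))\<^sup>2 \<le> (1 + \<delta>) * (norm X)\<^sup>2)}"

definition atom_set :: "(complex^'n^'m) set \<Rightarrow> bool" where
  "atom_set Atoms \<longleftrightarrow> (\<forall>a\<in>Atoms. norm a = 1 \<and> rank a = 1) \<and>
     (\<forall>X::complex^'n^'m. rank X = 1 \<longrightarrow> (\<exists>!a. a \<in> Atoms \<and> (\<exists>c. X = cmscale c a)))"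

text \<open>Xh k = \<widehat>X_k, Ph k = \<widehat>\<Psi>_k, Pp (Suc k) = \<Psi>'_{k+1},
  Pt (Suc k) = \<widetilde>\<Psi>_{k+1}, Xt (Suc k) = \<widetilde>X_{k+1}.\<close>
definition admira_run ::
  "(complex^'n^'m) set \<Rightarrow> (complex^'n^'m \<Rightarrow> complex^'p) \<Rightarrow> complex^'p \<Rightarrow> nat \<Rightarrow>
   (nat \<Rightarrow> complex^'n^'m) \<Rightarrow> (nat \<Rightarrow> (complex^'n^'m) set) \<Rightarrow>
   (nat \<Rightarrow> (complex^'n^'m) set) \<Rightarrow> (nat \<Rightarrow> (complex^'n^'m) set) \<Rightarrow>
   (nat \<Rightarrow> complex^'n^'m) \<Rightarrow> bool" where
  "admira_run Atoms A b r Xh Ph Pp Pt Xt \<longleftrightarrow>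
     Xh 0 = 0 \<and> Ph 0 = {} \<and>
     (\<forall>k.
       \<comment> \<open>step 1\<close>
       (Pp (Suc k) \<subseteq> Atoms \<and> finite (Pp (Suc k)) \<and> card (Pp (Suc k)) \<le> 2 * r \<and>
        (\<forall>Psi. Psi \<subseteq> Atoms \<and> finite Psi \<and> card Psi \<le> 2 * r \<longrightarrow>
           norm (proj_span Psi (adjoint_op A (b - A (Xh k))))
             \<le> norm (proj_span (Pp (Suc k)) (adjoint_op A (b - A (Xh k)))))) \<and>
       \<comment> \<open>step 2\<close>
       Pt (Suc k) = Pp (Suc k) \<union> Ph k \<and>
       \<comment> \<open>step 3\<close>
       (Xt (Suc k) \<in> cspan (Pt (Suc k)) \<and>
        (\<forall>X\<in>cspan (Pt (Suc k)). norm (b - A (Xt (Suc k))) \<le> norm (b - A X))) \<and>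
       \<comment> \<open>step 4\<close>
       (Ph (Suc k) \<subseteq> Atoms \<and> finite (Ph (Suc k)) \<and> card (Ph (Suc k)) \<le> r \<and>
        (\<forall>Psi. Psi \<subseteq> Atoms \<and> finite Psi \<and> card Psi \<le> r \<longrightarrow>
           norm (proj_span Psi (Xt (Suc k))) \<le> norm (proj_span (Ph (Suc k)) (Xt (Suc k))))) \<and>
       \<comment> \<open>step 5\<close>
       Xh (Suc k) = proj_span (Ph (Suc k)) (Xt (Suc k)))"

end

theory Submission
  imports Defs
begin

lemma cmscale_real: "cmscale (complex_of_real c) X = c *\<^sub>R X"
  by (auto simp: cmscale_def vec_eq_iff complex_eq_iff)

lemma cvscale_real: "cvscale (complex_of_real c) X = c *\<^sub>R X"
  by (auto simp: cvscale_def vec_eq_iff complex_eq_iff)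

lemma cmscale_0[simp]: "cmscale 0 X = 0" by (simp add: cmscale_def vec_eq_iff)
lemma cmscale_1[simp]: "cmscale 1 X = X" by (simp add: cmscale_def vec_eq_iff)
lemma cmscale_add_left: "cmscale (c + d) X = cmscale c X + cmscale d X"
  by (simp add: cmscale_def vec_eq_iff algebra_simps)
lemma cmscale_add_right: "cmscale c (X + Y) = cmscale c X + cmscale c Y"
  by (simp add: cmscale_def vec_eq_iff algebra_simps)
lemma cmscale_cmscale: "cmscale c (cmscale d X) = cmscale (c * d) X"
  by (simp add: cmscale_def vec_eq_iff algebra_simps)
lemma cmscale_sum: "cmscale c (sum f S) = (\<Sum>x\<in>S. cmscale c (f x))"
  by (simp add: cmscale_def vec_eq_iff sum_distrib_left)
lemma cmscale_sum_left: "cmscale (sum f S) X = (\<Sum>x\<in>S. cmscale (f x) X)"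
  by (induction S rule: infinite_finite_induct) (auto simp: cmscale_add_left)

lemma Re_minner: "Re (minner X Y) = X \<bullet> Y"
  by (simp add: minner_def inner_vec_def inner_complex_def Re_sum)

lemma Re_vinner: "Re (vinner X Y) = X \<bullet> Y"
  by (simp add: vinner_def inner_vec_def inner_complex_def Re_sum)

lemma minner_scale_left: "minner (cmscale c X) Y = c * minner X Y"
  by (simp add: minner_def cmscale_def sum_distrib_left algebra_simps)

lemma minner_scale_right: "minner X (cmscale c Y) = cnj c * minner X Y"
  by (simp add: minner_def cmscale_def sum_distrib_left algebra_simps)

lemma vinner_scale_left: "vinner (cvscale c X) Y = c * vinner X Y"
  by (simp add: vinner_def cvscale_def sum_distrib_left algebra_simps)

lemma Im_eq_Re: "Im w = Re (- \<i> * w)" by simp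

lemma clinear_linear:
  assumes "clinear_op A" shows "linear A"
proof (rule linearI)
  fix X Y show "A (X + Y) = A X + A Y" using assms by (simp add: clinear_op_def)
next
  fix r X show "A (r *\<^sub>R X) = r *\<^sub>R A X"
    using assms unfolding clinear_op_def by (metis cmscale_real cvscale_real)
qed

lemma adjoint_op_eq:
  fixes A :: "complex^'n^'m \<Rightarrow> complex^'p"
  assumes "clinear_op A"
  shows "adjoint_op A y = adjoint A y"
proof -
  have lin: "linear A" using assms by (rule clinear_linear)
  have key: "vinner (A X) y = minner X (adjoint A y)" for X
  proof (rule complex_eqI)
    show "Re (vinner (A X) y) = Re (minner X (adjoint A y))"
      by (simp add: Re_vinner Re_minner adjoint_works[OF lin])
    have "Im (vinner (A X) y) = Re (vinner (cvscale (- \<i>) (A X)) y)"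
      by (simp add: vinner_scale_left)
    also have "\<dots> = Re (vinner (A (cmscale (- \<i>) X)) y)"
      using assms by (simp add: clinear_op_def)
    also have "\<dots> = Re (minner (cmscale (- \<i>) X) (adjoint A y))"
      by (simp add: Re_vinner Re_minner adjoint_works[OF lin])
    also have "\<dots> = Im (minner X (adjoint A y))"
      by (simp add: minner_scale_left)
    finally show "Im (vinner (A X) y) = Im (minner X (adjoint A y))" .
  qed
  show ?thesis unfolding adjoint_op_def
  proof (rule the_equality)
    show "\<forall>X. vinner (A X) y = minner X (adjoint A y)" using key by blast
  next
    fix Z assume "\<forall>X. vinner (A X) y = minner X Z"
    then have "X \<bullet> Z = X \<bullet> adjoint A y" for X
      using key by (metis Re_minner)
    then have "(Z - adjoint A y) \<bullet> (Z - adjoint A y) = 0"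
      by (simp add: inner_diff_right)
    then show "Z = adjoint A y" by simp
  qed
qed

lemma adjoint_op_works:
  fixes A :: "complex^'n^'m \<Rightarrow> complex^'p"
  assumes "clinear_op A"
  shows "X \<bullet> adjoint_op A y = A X \<bullet> y"
  using adjoint_op_eq[OF assms] adjoint_works[OF clinear_linear[OF assms]] by simp


lemma cspan_mono: "S \<subseteq> T \<Longrightarrow> cspan S \<subseteq> cspan T"
  unfolding cspan_def by blast

lemma cspan_finite:
  assumes "finite S"
  shows "cspan S = {X. \<exists>c. X = (\<Sum>a\<in>S. cmscale (c a) a)}"
proof
  show "cspan S \<subseteq> {X. \<exists>c. X = (\<Sum>a\<in>S. cmscale (c a) a)}"
  proof
    fix X assume "X \<in> cspan S"
    then obtain T c where T: "finite T" "T \<subseteq> S" "X = (\<Sum>a\<in>T. cmscale (c a) a)"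
      unfolding cspan_def by blast
    define c' where "c' a = (if a \<in> T then c a else 0)" for a
    have "(\<Sum>a\<in>S. cmscale (c' a) a) = (\<Sum>a\<in>T. cmscale (c' a) a)"
      by (rule sum.mono_neutral_right) (use assms T in \<open>auto simp: c'_def\<close>)
    also have "\<dots> = X" using T by (simp add: c'_def)
    finally show "X \<in> {X. \<exists>c. X = (\<Sum>a\<in>S. cmscale (c a) a)}"
      by (intro CollectI exI[of _ c']) simp
  qed
next
  show "{X. \<exists>c. X = (\<Sum>a\<in>S. cmscale (c a) a)} \<subseteq> cspan S"
    using assms unfolding cspan_def by auto
qed

lemma subspace_cspan:
  assumes "finite S" shows "subspace (cspan S)"
  unfolding subspace_def cspan_finite[OF assms]
proof (intro conjI ballI allI)
  show "0 \<in> {X. \<exists>c. X = (\<Sum>a\<in>S. cmscale (c a) a)}"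
    by (rule CollectI, rule exI[of _ "\<lambda>_. 0"]) simp
next
  fix X Y assume "X \<in> {X. \<exists>c. X = (\<Sum>a\<in>S. cmscale (c a) a)}" "Y \<in> {X. \<exists>c. X = (\<Sum>a\<in>S. cmscale (c a) a)}"
  then obtain c d where "X = (\<Sum>a\<in>S. cmscale (c a) a)" "Y = (\<Sum>a\<in>S. cmscale (d a) a)" by blast
  then have "X + Y = (\<Sum>a\<in>S. cmscale (c a + d a) a)"
    by (simp add: cmscale_add_left sum.distrib)
  then show "X + Y \<in> {X. \<exists>c. X = (\<Sum>a\<in>S. cmscale (c a) a)}"
    by (intro CollectI exI[of _ "\<lambda>a. c a + d a"])
next
  fix r :: real and X assume "X \<in> {X. \<exists>c. X = (\<Sum>a\<in>S. cmscale (c a) a)}"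
  then obtain c where "X = (\<Sum>a\<in>S. cmscale (c a) a)" by blast
  then have "r *\<^sub>R X = (\<Sum>a\<in>S. cmscale (of_real r * c a) a)"
    by (simp add: cmscale_real[symmetric] cmscale_sum cmscale_cmscale)
  then show "r *\<^sub>R X \<in> {X. \<exists>c. X = (\<Sum>a\<in>S. cmscale (c a) a)}"
    by (intro CollectI exI[of _ "\<lambda>a. of_real r * c a"])
qed

lemma cspan_cmscale:
  assumes "finite S" "X \<in> cspan S" shows "cmscale k X \<in> cspan S"
proof -
  obtain c where "X = (\<Sum>a\<in>S. cmscale (c a) a)" using assms cspan_finite by auto
  then have "cmscale k X = (\<Sum>a\<in>S. cmscale (k * c a) a)"
    by (simp add: cmscale_sum cmscale_cmscale)
  then show ?thesis unfolding cspan_finite[OF assms(1)]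
    by (intro CollectI exI[of _ "\<lambda>a. k * c a"])
qed

lemma cspan_base: "a \<in> S \<Longrightarrow> a \<in> cspan S"
  unfolding cspan_def by (intro CollectI exI[of _ "{a}"] exI[of _ "\<lambda>_. 1"]) simp

lemma cspan_0: "0 \<in> cspan S"
  unfolding cspan_def by (rule CollectI, rule exI[of _ "{}"]) simp


lemma proj_char:
  assumes "finite S"
  shows "proj_span S X \<in> cspan S \<and> (\<forall>Z\<in>cspan S. (X - proj_span S X) \<bullet> Z = 0)"
proof -
  have sub: "subspace (cspan S)" by (rule subspace_cspan[OF assms])
  obtain y z where y: "y \<in> span (cspan S)" and z: "\<And>w. w \<in> span (cspan S) \<Longrightarrow> orthogonal z w"
    and xyz: "X = y + z"
    by (rule orthogonal_subspace_decomp_exists[of "cspan S" X]) blast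
  have sp: "span (cspan S) = cspan S" using sub span_eq_iff by blast
  have ys: "y \<in> cspan S" using y sp by simp
  have zo: "z \<bullet> w = 0" if "w \<in> cspan S" for w
    using z[of w] that sp by (simp add: orthogonal_def)
  have "proj_span S X = y"
    unfolding proj_span_def
  proof (rule the_equality)
    show "y \<in> cspan S \<and> (\<forall>Z\<in>cspan S. minner (X - y) Z = 0)"
    proof (intro conjI ballI ys)
      fix Z assume Z: "Z \<in> cspan S"
      have iZ: "cmscale \<i> Z \<in> cspan S" by (rule cspan_cmscale[OF assms Z])
      show "minner (X - y) Z = 0"
      proof (rule complex_eqI)
        show "Re (minner (X - y) Z) = Re 0" using zo[OF Z] xyz by (simp add: Re_minner)
        have "Im (minner (X - y) Z) = Re (minner (X - y) (cmscale \<i> Z))"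
          by (simp add: minner_scale_right)
        also have "\<dots> = 0" using zo[OF iZ] xyz by (simp add: Re_minner)
        finally show "Im (minner (X - y) Z) = Im 0" by simp
      qed
    qed
  next
    fix Y assume Y: "Y \<in> cspan S \<and> (\<forall>Z\<in>cspan S. minner (X - Y) Z = 0)"
    have d: "y - Y \<in> cspan S" using Y ys sub by (simp add: subspace_diff)
    have "(X - Y) \<bullet> (y - Y) = 0" using Y d by (metis Re_minner zero_complex.simps(1))
    moreover have "z \<bullet> (y - Y) = 0" using zo[OF d] .
    ultimately have "(y - Y) \<bullet> (y - Y) = 0"
      using xyz by (simp add: inner_diff_left inner_add_left)
    then show "Y = y" by simp
  qed
  then show ?thesis using ys zo xyz by simp
qed

lemma proj_in: "finite S \<Longrightarrow> proj_span S X \<in> cspan S"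
  using proj_char by blast

lemma proj_orth: "finite S \<Longrightarrow> Z \<in> cspan S \<Longrightarrow> (X - proj_span S X) \<bullet> Z = 0"
  using proj_char by blast

lemma proj_unique:
  assumes "finite S" "Y \<in> cspan S" "\<And>Z. Z \<in> cspan S \<Longrightarrow> (X - Y) \<bullet> Z = 0"
  shows "proj_span S X = Y"
proof -
  have sub: "subspace (cspan S)" by (rule subspace_cspan[OF assms(1)])
  have d: "proj_span S X - Y \<in> cspan S"
    using proj_in[OF assms(1)] assms(2) sub by (simp add: subspace_diff)
  have "(X - Y) \<bullet> (proj_span S X - Y) = 0" using assms(3) d by blast
  moreover have "(X - proj_span S X) \<bullet> (proj_span S X - Y) = 0" using proj_orth[OF assms(1) d] .
  ultimately have "(proj_span S X - Y) \<bullet> (proj_span S X - Y) = 0"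
    by (simp add: inner_diff_left inner_diff_right algebra_simps)
  then show ?thesis by simp
qed

lemma proj_pyth:
  assumes "finite S"
  shows "(norm X)\<^sup>2 = (norm (proj_span S X))\<^sup>2 + (norm (X - proj_span S X))\<^sup>2"
proof -
  have "orthogonal (proj_span S X) (X - proj_span S X)"
    using proj_orth[OF assms proj_in[OF assms]] by (simp add: orthogonal_def inner_commute)
  from norm_add_Pythagorean[OF this] show ?thesis by simp
qed

lemma proj_best:
  assumes "finite S" "Y \<in> cspan S"
  shows "norm (X - proj_span S X) \<le> norm (X - Y)"
proof -
  have sub: "subspace (cspan S)" by (rule subspace_cspan[OF assms(1)])
  have d: "proj_span S X - Y \<in> cspan S"
    using proj_in[OF assms(1)] assms(2) sub by (simp add: subspace_diff)
  have "orthogonal (X - proj_span S X) (proj_span S X - Y)"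
    using proj_orth[OF assms(1) d] by (simp add: orthogonal_def)
  from norm_add_Pythagorean[OF this]
  have "(norm (X - Y))\<^sup>2 = (norm (X - proj_span S X))\<^sup>2 + (norm (proj_span S X - Y))\<^sup>2" by simp
  then have "(norm (X - proj_span S X))\<^sup>2 \<le> (norm (X - Y))\<^sup>2" by simp
  then show ?thesis by (simp add: power_mono_iff)
qed

lemma proj_id: "finite S \<Longrightarrow> X \<in> cspan S \<Longrightarrow> proj_span S X = X"
  by (rule proj_unique) auto


lemma row_eq: "row i X = X $ i"
  by (simp add: row_def vec_eq_iff)

lemma cmscale_row: "(cmscale c a) $ i = c *s (a $ i)"
  by (simp add: cmscale_def vec_eq_iff)

lemma rank_cspan:
  fixes X :: "complex^'n^'m"
  assumes "finite S" "\<forall>a\<in>S. rank a \<le> 1" "X \<in> cspan S"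
  shows "rank X \<le> card S"
proof -
  obtain c where X: "X = (\<Sum>a\<in>S. cmscale (c a) a)" using assms(3) cspan_finite[OF assms(1)] by auto
  have "\<forall>a. \<exists>B. vec.independent B \<and> rows a \<subseteq> vec.span B \<and> card B = vec.dim (rows (a::complex^'n^'m))"
    by (metis vec.basis_exists)
  then obtain B where B: "\<And>a. vec.independent (B a)" "\<And>a. rows a \<subseteq> vec.span (B a)"
    "\<And>a. card (B a) = vec.dim (rows (a::complex^'n^'m))" by metis
  have finB: "finite (B a)" for a using B(1) vec.finiteI_independent by blast
  define U where "U = \<Union> (B ` S)"
  have finU: "finite U" unfolding U_def using assms(1) finB by blast
  have "card U \<le> (\<Sum>a\<in>S. card (B a))" unfolding U_def by (rule card_UN_le[OF assms(1)])
  also have "\<dots> \<le> (\<Sum>a\<in>S. 1)"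
    by (rule sum_mono) (use B(3) assms(2) in \<open>auto simp: row_rank_def_gen\<close>)
  finally have cU: "card U \<le> card S" by simp
  have "rows X \<subseteq> vec.span U"
  proof
    fix v assume "v \<in> rows X"
    then obtain i where v: "v = X $ i" by (auto simp: rows_def row_eq)
    have "v = (\<Sum>a\<in>S. c a *s (a $ i))" using v X by (simp add: cmscale_row)
    also have "\<dots> \<in> vec.span U"
    proof (rule vec.span_sum, rule vec.span_scale)
      fix a assume a: "a \<in> S"
      have "a $ i \<in> rows a" by (auto simp: rows_def row_eq)
      then have "a $ i \<in> vec.span (B a)" using B(2) by blast
      moreover have "vec.span (B a) \<subseteq> vec.span U"
        by (rule vec.span_mono) (use a in \<open>auto simp: U_def\<close>)
      ultimately show "a $ i \<in> vec.span U" by blast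
    qed
    finally show "v \<in> vec.span U" .
  qed
  then have "rank X \<le> card U" unfolding row_rank_def_gen by (rule vec.dim_le_card[OF _ finU])
  with cU show ?thesis by simp
qed


lemma rank0_zero:
  fixes M :: "complex^'n^'m"
  assumes "rank M = 0" shows "M = 0"
proof -
  have "rows M \<subseteq> {0}" using assms unfolding row_rank_def_gen by simp
  then have "M $ i = 0" for i by (auto simp: rows_def row_eq)
  then show ?thesis by (simp add: vec_eq_iff)
qed

lemma lowrank_atoms:
  fixes X :: "complex^'n^'m"
  assumes at: "atom_set Atoms" and rk: "rank X \<le> r"
  shows "\<exists>Psi. Psi \<subseteq> Atoms \<and> finite Psi \<and> card Psi \<le> r \<and> X \<in> cspan Psi"
proof -
  obtain B where B: "vec.independent B" "rows X \<subseteq> vec.span B" "card B = vec.dim (rows X)"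
    by (metis vec.basis_exists)
  have finB: "finite B" using B(1) vec.finiteI_independent by blast
  have "\<forall>i. \<exists>u. X $ i = (\<Sum>v\<in>B. u v *s v)"
  proof
    fix i
    have "X $ i \<in> rows X" by (auto simp: rows_def row_eq)
    then have "X $ i \<in> range (\<lambda>u. \<Sum>v\<in>B. u v *s v)" using B(2) vec.span_finite[OF finB] by blast
    then show "\<exists>u. X $ i = (\<Sum>v\<in>B. u v *s v)" by auto
  qed
  then obtain u where u: "\<And>i. X $ i = (\<Sum>v\<in>B. u i v *s v)" by metis
  define M where "M b = (\<chi> i. u i b *s b)" for b
  have Xsum: "X = (\<Sum>b\<in>B. M b)" by (simp add: vec_eq_iff M_def u)
  have rkM: "rank (M b) \<le> 1" for b
  proof -
    have "rows (M b) \<subseteq> vec.span {b}"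
    proof
      fix v assume "v \<in> rows (M b)"
      then obtain i where "v = u i b *s b" by (auto simp: rows_def row_eq M_def)
      then show "v \<in> vec.span {b}" by (simp add: vec.span_scale vec.span_base)
    qed
    then have "vec.dim (rows (M b)) \<le> card {b}" by (rule vec.dim_le_card) simp
    then show ?thesis by (simp add: row_rank_def_gen)
  qed
  have "\<forall>b. \<exists>a c. M b \<noteq> 0 \<longrightarrow> a \<in> Atoms \<and> M b = cmscale c a"
  proof
    fix b show "\<exists>a c. M b \<noteq> 0 \<longrightarrow> a \<in> Atoms \<and> M b = cmscale c a"
    proof (cases "M b = 0")
      case False
      then have "rank (M b) \<noteq> 0" using rank0_zero by blast
      then have "rank (M b) = 1" using rkM[of b] by simp
      then show ?thesis using at unfolding atom_set_def by metis
    qed simp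
  qed
  then obtain atm co where atm: "\<And>b. M b \<noteq> 0 \<Longrightarrow> atm b \<in> Atoms \<and> M b = cmscale (co b) (atm b)"
    by metis
  define Psi where "Psi = atm ` {b\<in>B. M b \<noteq> 0}"
  have finP: "finite Psi" unfolding Psi_def using finB by simp
  have "card Psi \<le> card {b\<in>B. M b \<noteq> 0}" unfolding Psi_def by (rule card_image_le) (use finB in simp)
  also have "\<dots> \<le> card B" by (rule card_mono[OF finB]) auto
  also have "\<dots> \<le> r" using B(3) rk by (simp add: row_rank_def_gen)
  finally have cP: "card Psi \<le> r" .
  have PA: "Psi \<subseteq> Atoms" unfolding Psi_def using atm by auto
  have "X \<in> cspan Psi" unfolding Xsum
  proof (rule subspace_sum[OF subspace_cspan[OF finP]])
    fix b assume "b \<in> B"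
    show "M b \<in> cspan Psi"
    proof (cases "M b = 0")
      case True then show ?thesis by (simp add: cspan_0)
    next
      case False
      then have "atm b \<in> Psi" unfolding Psi_def using \<open>b \<in> B\<close> by auto
      then have "cmscale (co b) (atm b) \<in> cspan Psi" by (intro cspan_cmscale[OF finP] cspan_base)
      then show ?thesis using atm[OF False] by simp
    qed
  qed
  then show ?thesis using finP cP PA by blast
qed


lemma rip_bounds:
  fixes A :: "complex^'n^'m \<Rightarrow> complex^'p"
  assumes lin: "clinear_op A" and rc: "rip_const A s \<le> d" and rk: "rank X \<le> s"
  shows "(1 - d) * (norm X)\<^sup>2 \<le> (norm (A X))\<^sup>2 \<and> (norm (A X))\<^sup>2 \<le> (1 + d) * (norm X)\<^sup>2"
proof -
  define D where "D = {\<delta>. \<delta> \<ge> 0 \<and> (\<forall>X::complex^'n^'m. rank X \<le> s \<longrightarrow>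
      (1 - \<delta>) * (norm X)\<^sup>2 \<le> (norm (A X))\<^sup>2 \<and> (norm (A X))\<^sup>2 \<le> (1 + \<delta>) * (norm X)\<^sup>2)}"
  have rcD: "rip_const A s = Inf D" unfolding D_def rip_const_def by simp
  have "bounded_linear A" using clinear_linear[OF lin] linear_conv_bounded_linear by blast
  then obtain K where K: "K > 0" "\<And>X. norm (A X) \<le> norm X * K"
    using bounded_linear.pos_bounded by blast
  have "K\<^sup>2 + 1 \<in> D"
  proof -
    have "(norm (A X))\<^sup>2 \<le> (1 + (K\<^sup>2 + 1)) * (norm X)\<^sup>2" for X
    proof -
      have "(norm (A X))\<^sup>2 \<le> (norm X * K)\<^sup>2" using K(2)[of X] by (simp add: power_mono)
      also have "\<dots> \<le> (1 + (K\<^sup>2 + 1)) * (norm X)\<^sup>2" by (simp add: power_mult_distrib algebra_simps)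
      finally show ?thesis .
    qed
    moreover have "(1 - (K\<^sup>2 + 1)) * (norm X)\<^sup>2 \<le> (norm (A X))\<^sup>2" for X :: "complex^'n^'m"
    proof -
      have "(1 - (K\<^sup>2 + 1)) * (norm X)\<^sup>2 \<le> 0" by (simp add: mult_nonpos_nonneg)
      then show ?thesis by (meson order_trans zero_le_power2)
    qed
    ultimately show ?thesis unfolding D_def
      by (intro CollectI conjI allI impI) (simp_all add: add_nonneg_nonneg)
  qed
  then have Dne: "D \<noteq> {}" by blast
  have approx: "\<exists>\<delta>\<in>D. \<delta> < d + e" if "e > 0" for e
  proof -
    have "Inf D < d + e" using rcD rc that by linarith
    then show ?thesis using cInf_lessD[OF Dne] by blast
  qed
  define N where "N = (norm X)\<^sup>2"
  have N0: "N \<ge> 0" unfolding N_def by simp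
  have both: "(1 - d) * N \<le> (norm (A X))\<^sup>2 + e \<and> (norm (A X))\<^sup>2 \<le> (1 + d) * N + e" if e: "e > 0" for e
  proof -
    have e': "e / (N + 1) > 0" using e N0 by simp
    obtain \<delta> where \<delta>: "\<delta> \<in> D" "\<delta> < d + e / (N + 1)" using approx[OF e'] by blast
    have "\<forall>X::complex^'n^'m. rank X \<le> s \<longrightarrow>
      (1 - \<delta>) * (norm X)\<^sup>2 \<le> (norm (A X))\<^sup>2 \<and> (norm (A X))\<^sup>2 \<le> (1 + \<delta>) * (norm X)\<^sup>2"
      using \<delta>(1) unfolding D_def by blast
    then have b: "(1 - \<delta>) * N \<le> (norm (A X))\<^sup>2" "(norm (A X))\<^sup>2 \<le> (1 + \<delta>) * N"
      using rk unfolding N_def by blast+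
    have "e / (N + 1) * N \<le> e" using e N0 by (simp add: field_simps)
    moreover have "(\<delta> - d) * N \<le> e / (N + 1) * N" using \<delta>(2) N0 by (intro mult_right_mono) auto
    ultimately have "(\<delta> - d) * N \<le> e" by linarith
    then show ?thesis using b by (simp add: algebra_simps)
  qed
  have "(1 - d) * N \<le> (norm (A X))\<^sup>2" by (rule field_le_epsilon) (use both in blast)
  moreover have "(norm (A X))\<^sup>2 \<le> (1 + d) * N" by (rule field_le_epsilon) (use both in blast)
  ultimately show ?thesis unfolding N_def by blast
qed


lemma rip_bilin_aux:
  fixes A :: "'a::real_inner \<Rightarrow> 'b::real_inner"
  assumes lin: "linear A" and sub: "subspace S" and d: "d \<ge> 0"
    and rip: "\<And>V. V \<in> S \<Longrightarrow> (1 - d) * (norm V)\<^sup>2 \<le> (norm (A V))\<^sup>2 \<and> (norm (A V))\<^sup>2 \<le> (1 + d) * (norm V)\<^sup>2"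
    and X: "X \<in> S" and Y: "Y \<in> S"
  shows "\<bar>A X \<bullet> A Y - X \<bullet> Y\<bar> \<le> d * ((norm X)\<^sup>2 + (norm Y)\<^sup>2) / 2"
proof -
  define h where "h V = (norm (A V))\<^sup>2 - (norm V)\<^sup>2" for V
  have hb: "\<bar>h V\<bar> \<le> d * (norm V)\<^sup>2" if "V \<in> S" for V
    using rip[OF that] unfolding h_def by (simp add: abs_le_iff algebra_simps)
  have XpY: "X + Y \<in> S" and XmY: "X - Y \<in> S" using X Y sub by (auto simp: subspace_add subspace_diff)
  have Ap: "A (X + Y) = A X + A Y" and Am: "A (X - Y) = A X - A Y"
    using lin by (simp_all add: linear_add linear_diff)
  have id: "h (X + Y) - h (X - Y) = 4 * (A X \<bullet> A Y - X \<bullet> Y)"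
    unfolding h_def Ap Am power2_norm_eq_inner
    by (simp add: inner_add_left inner_add_right inner_diff_left inner_diff_right inner_commute algebra_simps)
  have par: "(norm (X + Y))\<^sup>2 + (norm (X - Y))\<^sup>2 = 2 * ((norm X)\<^sup>2 + (norm Y)\<^sup>2)"
    unfolding power2_norm_eq_inner
    by (simp add: inner_add_left inner_add_right inner_diff_left inner_diff_right inner_commute algebra_simps)
  have "\<bar>4 * (A X \<bullet> A Y - X \<bullet> Y)\<bar> \<le> \<bar>h (X + Y)\<bar> + \<bar>h (X - Y)\<bar>" unfolding id[symmetric] by simp
  also have "\<dots> \<le> d * (norm (X + Y))\<^sup>2 + d * (norm (X - Y))\<^sup>2" using hb[OF XpY] hb[OF XmY] by simp
  also have "\<dots> = d * ((norm (X + Y))\<^sup>2 + (norm (X - Y))\<^sup>2)" by (simp add: distrib_left)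
  also have "\<dots> = 2 * d * ((norm X)\<^sup>2 + (norm Y)\<^sup>2)" unfolding par by simp
  finally have "4 * \<bar>A X \<bullet> A Y - X \<bullet> Y\<bar> \<le> 2 * (d * ((norm X)\<^sup>2 + (norm Y)\<^sup>2))"
    by (simp only: abs_mult abs_numeral mult.assoc)
  then show ?thesis by simp
qed

lemma rip_bilin:
  fixes A :: "'a::real_inner \<Rightarrow> 'b::real_inner"
  assumes lin: "linear A" and sub: "subspace S" and d: "d \<ge> 0"
    and rip: "\<And>V. V \<in> S \<Longrightarrow> (1 - d) * (norm V)\<^sup>2 \<le> (norm (A V))\<^sup>2 \<and> (norm (A V))\<^sup>2 \<le> (1 + d) * (norm V)\<^sup>2"
    and X: "X \<in> S" and Y: "Y \<in> S"
  shows "\<bar>A X \<bullet> A Y - X \<bullet> Y\<bar> \<le> d * norm X * norm Y"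
proof (cases "X = 0 \<or> Y = 0")
  case True
  then show ?thesis using lin by (auto simp: linear_0)
next
  case False
  then have nx: "norm X > 0" and ny: "norm Y > 0" by auto
  define X' where "X' = (1 / norm X) *\<^sub>R X"
  define Y' where "Y' = (1 / norm Y) *\<^sub>R Y"
  have X'S: "X' \<in> S" and Y'S: "Y' \<in> S" unfolding X'_def Y'_def using X Y sub by (auto simp: subspace_scale)
  have n1: "norm X' = 1" "norm Y' = 1" unfolding X'_def Y'_def using nx ny by auto
  have eq: "A X' \<bullet> A Y' - X' \<bullet> Y' = (A X \<bullet> A Y - X \<bullet> Y) / (norm X * norm Y)"
    unfolding X'_def Y'_def using lin by (simp add: linear_scale diff_divide_distrib mult.commute)
  have "\<bar>A X' \<bullet> A Y' - X' \<bullet> Y'\<bar> \<le> d" using rip_bilin_aux[OF lin sub d rip X'S Y'S] n1 by simp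
  then have "\<bar>A X \<bullet> A Y - X \<bullet> Y\<bar> / (norm X * norm Y) \<le> d" unfolding eq using nx ny by (simp add: abs_divide)
  then show ?thesis using nx ny by (simp add: divide_le_eq mult.assoc)
qed


lemma sq_le_lin:
  fixes x c :: real
  assumes "x \<ge> 0" "c \<ge> 0" "x\<^sup>2 \<le> c * x" shows "x \<le> c"
proof (cases "x = 0")
  case False
  then have "x > 0" using assms(1) by simp
  then show ?thesis using assms(3) by (simp add: power2_eq_square)
qed (use assms in simp)

lemma scale_div: "(k::real) * a \<le> c * x \<Longrightarrow> k > 0 \<Longrightarrow> a \<le> (c / k) * x"
  by (simp add: field_simps)

lemma final_arith:
  fixes a n e h y g x res :: real
  assumes "0 \<le> a" "0 \<le> n" "e \<le> 0.04 * a + 1.02 * n" "h \<le> 2 * e" "y \<le> h"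
    "g \<le> (0.04 * y + 1.02 * n) / (1 - 0.04)" "x \<le> y + g"
  shows "res \<le> 2 * x \<Longrightarrow> res \<le> 0.5 * a + 6.5 * n"
  using assms by simp

lemma norm_le_from_sq: "(norm a)\<^sup>2 \<le> (norm b)\<^sup>2 \<Longrightarrow> norm a \<le> norm b"
  by (simp add: power_mono_iff)

lemma proj_proj:
  assumes "finite S" "finite T" "S \<subseteq> T"
  shows "proj_span S (proj_span T X) = proj_span S X"
proof (rule proj_unique[OF assms(1) proj_in[OF assms(1)]])
  fix Z assume Z: "Z \<in> cspan S"
  then have ZT: "Z \<in> cspan T" using cspan_mono[OF assms(3)] by blast
  have "(proj_span T X - proj_span S X) \<bullet> Z = (X - proj_span S X) \<bullet> Z - (X - proj_span T X) \<bullet> Z"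
    by (simp add: inner_diff_left)
  also have "\<dots> = 0" using proj_orth[OF assms(1) Z] proj_orth[OF assms(2) ZT] by simp
  finally show "(proj_span T X - proj_span S X) \<bullet> Z = 0" .
qed

lemma ls_orth:
  fixes A :: "'a::real_inner \<Rightarrow> 'b::real_inner"
  assumes lin: "linear A" and sub: "subspace S" and Xt: "Xt \<in> S"
    and opt: "\<forall>X\<in>S. norm (b - A Xt) \<le> norm (b - A X)" and Z: "Z \<in> S"
  shows "(b - A Xt) \<bullet> A Z = 0"
proof -
  define rr where "rr = b - A Xt"
  define c where "c = rr \<bullet> A Z"
  define q where "q = A Z \<bullet> A Z"
  have q0: "q \<ge> 0" unfolding q_def by simp
  have ineq: "0 \<le> t * t * q - 2 * t * c" for t
  proof -
    have "Xt + t *\<^sub>R Z \<in> S" using sub Xt Z by (simp add: subspace_add subspace_scale)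
    then have "norm rr \<le> norm (rr - t *\<^sub>R A Z)"
      using opt lin unfolding rr_def by (auto simp: linear_add linear_scale algebra_simps)
    then have "(norm rr)\<^sup>2 \<le> (norm (rr - t *\<^sub>R A Z))\<^sup>2" by (simp add: power_mono)
    then show ?thesis unfolding power2_norm_eq_inner c_def q_def
      by (simp add: inner_diff_left inner_diff_right inner_commute algebra_simps)
  qed
  define t where "t = c / (q + 1)"
  have "0 \<le> t * t * q - 2 * t * c" by (rule ineq)
  moreover have "t * t * q - 2 * t * c = - (c * c * (q + 2)) / ((q + 1) * (q + 1))"
    unfolding t_def using q0 by (simp add: divide_simps) (simp add: algebra_simps)
  ultimately have "0 \<le> - (c * c * (q + 2)) / ((q + 1) * (q + 1))" by simp
  moreover have "(q + 1) * (q + 1) > 0" using q0 by simp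
  ultimately have "0 \<le> - (c * c * (q + 2))" by (simp add: divide_le_0_iff)
  then have "c * c * (q + 2) \<le> 0" by (simp add: algebra_simps)
  then have "c * c \<le> 0" using q0 by (smt (verit) mult_le_0_iff zero_le_square)
  then have "c = 0" by (simp add: mult_le_0_iff) linarith
  then show ?thesis unfolding c_def rr_def .
qed


lemma main_step:
  fixes A :: "complex^'n^'m \<Rightarrow> complex^'p"
    and Atoms :: "(complex^'n^'m) set"
    and X0 :: "complex^'n^'m"
    and nu b :: "complex^'p"
    and r :: nat
    and Xh Xt :: "nat \<Rightarrow> complex^'n^'m"
    and Ph Pp Pt :: "nat \<Rightarrow> (complex^'n^'m) set"
  assumes clin: "clinear_op A"
    and rc: "rip_const A (4 * r) \<le> 0.04"
    and bdef: "b = A X0 + nu"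
    and at: "atom_set Atoms"
    and run: "admira_run Atoms A b r Xh Ph Pp Pt Xt"
    and P0: "Psi0 \<subseteq> Atoms" "finite Psi0" "card Psi0 \<le> r" "X0 \<in> cspan Psi0"
    and Phk: "Ph k \<subseteq> Atoms" "finite (Ph k)" "card (Ph k) \<le> r" "Xh k \<in> cspan (Ph k)"
  shows "norm (X0 - Xh (Suc k)) \<le> 0.5 * norm (X0 - Xh k) + 6.5 * norm nu"
proof -
  have lin: "linear A" by (rule clinear_linear[OF clin])
  have rank1: "\<forall>a\<in>Atoms. rank a \<le> 1" using at unfolding atom_set_def by auto
  have ripS: "(1 - 0.04) * (norm V)\<^sup>2 \<le> (norm (A V))\<^sup>2 \<and> (norm (A V))\<^sup>2 \<le> (1 + 0.04) * (norm V)\<^sup>2"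
    if "S \<subseteq> Atoms" "finite S" "card S \<le> 4 * r" "V \<in> cspan S" for S V
  proof -
    have "rank V \<le> card S" using rank_cspan[OF that(2) _ that(4)] rank1 that(1) by blast
    then show ?thesis using rip_bounds[OF clin rc] that(3) by simp
  qed
  have bil: "\<bar>A X \<bullet> A Y - X \<bullet> Y\<bar> \<le> 0.04 * norm X * norm Y"
    if "S \<subseteq> Atoms" "finite S" "card S \<le> 4 * r" "X \<in> cspan S" "Y \<in> cspan S" for S X Y
    by (rule rip_bilin[OF lin subspace_cspan[OF that(2)] _ _ that(4,5)]) (use ripS that in auto)
  have upA: "norm (A V) \<le> 1.02 * norm V"
    if "S \<subseteq> Atoms" "finite S" "card S \<le> 4 * r" "V \<in> cspan S" for S V
  proof -
    have "(norm (A V))\<^sup>2 \<le> (1 + 0.04) * (norm V)\<^sup>2" using ripS[OF that] by simp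
    also have "\<dots> \<le> 1.0404 * (norm V)\<^sup>2" by (intro mult_right_mono) auto
    also have "\<dots> = (1.02 * norm V)\<^sup>2" by (simp add: power2_eq_square)
    finally show ?thesis by (rule power2_le_imp_le) simp
  qed
  note Rall = run[unfolded admira_run_def, THEN conjunct2, THEN conjunct2]
  note R = spec[OF Rall, of k]
  define W where "W = Pp (Suc k)"
  define V where "V = Psi0 \<union> Ph k"
  define Z where "Z = W \<union> V"
  define U where "U = Pt (Suc k)"
  define Q where "Q = Psi0 \<union> U"
  define E where "E = adjoint_op A (b - A (Xh k))"
  define D where "D = X0 - Xh k"
  define T where "T = Xt (Suc k)"
  define H where "H = Ph (Suc k)"
  have W: "W \<subseteq> Atoms" "finite W" "card W \<le> 2 * r" using R unfolding W_def by auto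
  have U: "U = W \<union> Ph k" using R unfolding U_def W_def by auto
  have optW: "norm (proj_span S E) \<le> norm (proj_span W E)"
    if "S \<subseteq> Atoms" "finite S" "card S \<le> 2 * r" for S
    using R that unfolding E_def W_def by blast
  have T: "T \<in> cspan U" "\<forall>X\<in>cspan U. norm (b - A T) \<le> norm (b - A X)"
    using R unfolding T_def U_def by auto
  have H: "H \<subseteq> Atoms" "finite H" "card H \<le> r"
    "\<And>S. S \<subseteq> Atoms \<Longrightarrow> finite S \<Longrightarrow> card S \<le> r \<Longrightarrow> norm (proj_span S T) \<le> norm (proj_span H T)"
    using R unfolding H_def T_def by auto
  have XhS: "Xh (Suc k) = proj_span H T" using R unfolding H_def T_def by auto
  have V: "V \<subseteq> Atoms" "finite V" "card V \<le> 2 * r"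
    unfolding V_def using P0 Phk card_Un_le[of Psi0 "Ph k"] by auto
  have Zf: "Z \<subseteq> Atoms" "finite Z" "card Z \<le> 4 * r"
    unfolding Z_def using W V card_Un_le[of W V] by auto
  have Uf: "U \<subseteq> Atoms" "finite U" "card U \<le> 3 * r"
    unfolding U using W Phk card_Un_le[of W "Ph k"] by auto
  have Qf: "Q \<subseteq> Atoms" "finite Q" "card Q \<le> 4 * r"
    unfolding Q_def using P0 Uf card_Un_le[of Psi0 U] by auto
  have subV: "subspace (cspan V)" by (rule subspace_cspan[OF V(2)])
  have subZ: "subspace (cspan Z)" by (rule subspace_cspan[OF Zf(2)])
  have subU: "subspace (cspan U)" by (rule subspace_cspan[OF Uf(2)])
  have subQ: "subspace (cspan Q)" by (rule subspace_cspan[OF Qf(2)])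
  have DV: "D \<in> cspan V" unfolding D_def
    using P0(4) Phk(4) cspan_mono[of Psi0 V] cspan_mono[of "Ph k" V] subV
    by (intro subspace_diff) (auto simp: V_def)
  have DZ: "D \<in> cspan Z" using DV cspan_mono[of V Z] by (auto simp: Z_def)
  have resid: "b - A (Xh k) = A D + nu" unfolding bdef D_def using lin by (simp add: linear_diff)
  define F where "F = proj_span Z E"
  define e where "e = F - D"
  have FZ: "F \<in> cspan Z" unfolding F_def by (rule proj_in[OF Zf(2)])
  have eZ: "e \<in> cspan Z" unfolding e_def using FZ DZ subZ by (simp add: subspace_diff)
  have e_bound: "norm e \<le> 0.04 * norm D + 1.02 * norm nu"
  proof -
    have "(norm e)\<^sup>2 = e \<bullet> e" by (simp add: power2_norm_eq_inner)
    also have "\<dots> = E \<bullet> e - D \<bullet> e - (E - F) \<bullet> e" unfolding e_def by (simp add: inner_diff_left)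
    also have "(E - F) \<bullet> e = 0" using proj_orth[OF Zf(2) eZ] unfolding F_def .
    also have "E \<bullet> e = A e \<bullet> (A D + nu)"
      unfolding E_def using adjoint_op_works[OF clin] resid by (metis inner_commute)
    also have "A e \<bullet> (A D + nu) - D \<bullet> e - 0 = (A e \<bullet> A D - e \<bullet> D) + A e \<bullet> nu"
      by (simp add: inner_add_right inner_commute)
    also have "\<dots> \<le> 0.04 * norm e * norm D + norm (A e) * norm nu"
      using bil[OF Zf eZ DZ] Cauchy_Schwarz_ineq2[of "A e" nu] by linarith
    also have "\<dots> \<le> 0.04 * norm e * norm D + 1.02 * norm e * norm nu"
      using mult_right_mono[OF upA[OF Zf eZ], of "norm nu"] by simp
    also have "\<dots> = (0.04 * norm D + 1.02 * norm nu) * norm e" by (simp add: algebra_simps)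
    finally have "(norm e)\<^sup>2 \<le> (0.04 * norm D + 1.02 * norm nu) * norm e" .
    from sq_le_lin[OF norm_ge_zero _ this] show ?thesis by simp
  qed
  have PWF: "proj_span W F = proj_span W E"
    unfolding F_def by (rule proj_proj[OF W(2) Zf(2)]) (simp add: Z_def)
  have PVF: "proj_span V F = proj_span V E"
    unfolding F_def by (rule proj_proj[OF V(2) Zf(2)]) (simp add: Z_def)
  have "(norm (F - proj_span W F))\<^sup>2 = (norm F)\<^sup>2 - (norm (proj_span W F))\<^sup>2"
    using proj_pyth[OF W(2), of F] by simp
  also have "\<dots> \<le> (norm F)\<^sup>2 - (norm (proj_span V F))\<^sup>2"
    using optW[OF V(1,2,3)] unfolding PWF PVF by (simp add: power_mono)
  also have "\<dots> = (norm (F - proj_span V F))\<^sup>2"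
    using proj_pyth[OF V(2), of F] by simp
  also have "\<dots> \<le> (norm (F - D))\<^sup>2"
    using proj_best[OF V(2) DV, of F] by (simp add: power_mono)
  finally have g: "norm (F - proj_span W F) \<le> norm e" unfolding e_def by (rule norm_le_from_sq)
  have PWFin: "proj_span W F \<in> cspan W" by (rule proj_in[OF W(2)])
  have "norm (D - proj_span W D) \<le> norm (D - proj_span W F)" by (rule proj_best[OF W(2) PWFin])
  also have "\<dots> \<le> norm (D - F) + norm (F - proj_span W F)"
    using norm_triangle_ineq[of "D - F" "F - proj_span W F"] by simp
  also have "norm (D - F) = norm e" unfolding e_def by (simp add: norm_minus_commute)
  finally have h: "norm (D - proj_span W D) \<le> 2 * norm e" using g by simp
  define Y where "Y = X0 - proj_span U X0"
  have "proj_span W D + Xh k \<in> cspan U"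
    using proj_in[OF W(2), of D] Phk(4) cspan_mono[of W U] cspan_mono[of "Ph k" U] subU U
    by (intro subspace_add) auto
  then have "norm Y \<le> norm (X0 - (proj_span W D + Xh k))" unfolding Y_def by (rule proj_best[OF Uf(2)])
  also have "X0 - (proj_span W D + Xh k) = D - proj_span W D" unfolding D_def by simp
  finally have y: "norm Y \<le> norm (D - proj_span W D)" .
  define G where "G = proj_span U X0 - T"
  have GU: "G \<in> cspan U" unfolding G_def using proj_in[OF Uf(2)] T(1) subU by (simp add: subspace_diff)
  have UQ: "cspan U \<subseteq> cspan Q" by (rule cspan_mono) (simp add: Q_def)
  have GQ: "G \<in> cspan Q" using GU UQ by blast
  have YQ: "Y \<in> cspan Q" unfolding Y_def
    using P0(4) cspan_mono[of Psi0 Q] proj_in[OF Uf(2), of X0] UQ subQ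
    by (intro subspace_diff) (auto simp: Q_def)
  have YG: "Y \<bullet> G = 0" unfolding Y_def by (rule proj_orth[OF Uf(2) GU])
  have ne: "(b - A T) \<bullet> A G = 0" by (rule ls_orth[OF lin subU T(1) T(2) GU])
  have bT: "b - A T = A Y + A G + nu" unfolding bdef Y_def G_def using lin
    by (simp add: linear_diff algebra_simps)
  have "(1 - 0.04) * (norm G)\<^sup>2 \<le> (norm (A G))\<^sup>2" using ripS[OF Qf GQ] by simp
  also have "(norm (A G))\<^sup>2 = - (A Y \<bullet> A G) - nu \<bullet> A G"
    using ne unfolding bT power2_norm_eq_inner by (simp add: inner_add_left)
  also have "\<dots> \<le> 0.04 * norm Y * norm G + 1.02 * norm G * norm nu"
  proof -
    have "\<bar>A Y \<bullet> A G\<bar> \<le> 0.04 * norm Y * norm G" using bil[OF Qf YQ GQ] YG by simp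
    moreover have "\<bar>nu \<bullet> A G\<bar> \<le> norm nu * norm (A G)" by (rule Cauchy_Schwarz_ineq2)
    moreover have "norm nu * norm (A G) \<le> 1.02 * norm G * norm nu"
      using mult_left_mono[OF upA[OF Qf GQ], of "norm nu"] by (simp add: ac_simps)
    ultimately show ?thesis by linarith
  qed
  also have "\<dots> = (0.04 * norm Y + 1.02 * norm nu) * norm G" by (simp add: algebra_simps)
  finally have "(1 - 0.04) * (norm G)\<^sup>2 \<le> (0.04 * norm Y + 1.02 * norm nu) * norm G" .
  then have "(norm G)\<^sup>2 \<le> ((0.04 * norm Y + 1.02 * norm nu) / (1 - 0.04)) * norm G"
    by (rule scale_div) simp
  from sq_le_lin[OF norm_ge_zero _ this]
  have gG: "norm G \<le> (0.04 * norm Y + 1.02 * norm nu) / (1 - 0.04)" by simp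
  have "X0 - T = Y + G" unfolding Y_def G_def by simp
  then have xT: "norm (X0 - T) \<le> norm Y + norm G" by (simp add: norm_triangle_ineq)
  have "(norm (T - proj_span H T))\<^sup>2 = (norm T)\<^sup>2 - (norm (proj_span H T))\<^sup>2"
    using proj_pyth[OF H(2), of T] by simp
  also have "\<dots> \<le> (norm T)\<^sup>2 - (norm (proj_span Psi0 T))\<^sup>2"
    using H(4)[OF P0(1,2,3)] by (simp add: power_mono)
  also have "\<dots> = (norm (T - proj_span Psi0 T))\<^sup>2"
    using proj_pyth[OF P0(2), of T] by simp
  also have "\<dots> \<le> (norm (T - X0))\<^sup>2"
    using proj_best[OF P0(2) P0(4), of T] by (simp add: power_mono)
  finally have "norm (T - proj_span H T) \<le> norm (T - X0)" by (rule norm_le_from_sq)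
  then have "norm (X0 - Xh (Suc k)) \<le> 2 * norm (X0 - T)"
    unfolding XhS using norm_triangle_ineq[of "X0 - T" "T - proj_span H T"] by (simp add: norm_minus_commute)
  then show ?thesis using final_arith[OF norm_ge_zero norm_ge_zero e_bound h y gG xT] unfolding D_def
    by simp
qed


theorem theorem3:
  fixes A :: "complex^'n^'m \<Rightarrow> complex^'p"
    and Atoms :: "(complex^'n^'m) set"
    and X0 :: "complex^'n^'m"
    and nu b :: "complex^'p"
    and r :: nat
    and Xh Xt :: "nat \<Rightarrow> complex^'n^'m"
    and Ph Pp Pt :: "nat \<Rightarrow> (complex^'n^'m) set"
  assumes "r \<ge> 1"
    and "clinear_op A"
    and "rip_const A (4 * r) \<le> 0.04"
    and "rank X0 \<le> r"
    and "b = A X0 + nu"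
    and "atom_set Atoms"
    and "admira_run Atoms A b r Xh Ph Pp Pt Xt"
  shows "(\<forall>k. norm (X0 - Xh (Suc k)) \<le> 0.5 * norm (X0 - Xh k) + 6.5 * norm nu) \<and>
         (\<forall>k. norm (X0 - Xh k) \<le> (1/2) ^ k * norm X0 + 13 * norm nu)"
proof -
  obtain Psi0 where P0: "Psi0 \<subseteq> Atoms" "finite Psi0" "card Psi0 \<le> r" "X0 \<in> cspan Psi0"
    using lowrank_atoms[OF assms(6) assms(4)] by blast
  note run = assms(7)[unfolded admira_run_def]
  have Phk: "Ph k \<subseteq> Atoms \<and> finite (Ph k) \<and> card (Ph k) \<le> r \<and> Xh k \<in> cspan (Ph k)" for k
  proof (cases k)
    case 0
    then show ?thesis using run by (simp add: cspan_0)
  next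
    case (Suc j)
    note R = spec[OF run[THEN conjunct2, THEN conjunct2], of j]
    have f: "finite (Ph (Suc j))" using R by blast
    have "Xh (Suc j) = proj_span (Ph (Suc j)) (Xt (Suc j))" using R by blast
    then have "Xh (Suc j) \<in> cspan (Ph (Suc j))" using proj_in[OF f] by simp
    then show ?thesis using R Suc by blast
  qed
  have step: "norm (X0 - Xh (Suc k)) \<le> 0.5 * norm (X0 - Xh k) + 6.5 * norm nu" for k
    using Phk[of k] by (intro main_step[OF assms(2,3,5,6,7) P0]) auto
  have "norm (X0 - Xh k) \<le> (1/2) ^ k * norm X0 + 13 * norm nu" for k
  proof (induction k)
    case 0
    then show ?case using run by simp
  next
    case (Suc k)
    have "norm (X0 - Xh (Suc k)) \<le> 0.5 * norm (X0 - Xh k) + 6.5 * norm nu" by (rule step)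
    also have "\<dots> \<le> 0.5 * ((1/2) ^ k * norm X0 + 13 * norm nu) + 6.5 * norm nu"
      using Suc.IH by simp
    also have "\<dots> = (1/2) ^ Suc k * norm X0 + 13 * norm nu" by (simp add: field_simps)
    finally show ?case .
  qed
  then show ?thesis using step by blast
qed

end
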